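(* A connected graph $G$ on $n$ vertices satisfies $\operatorname{cdim}(G)=n-1$ if and only if $G$ is uniformly connected, i.e., there is an integer $k$ such that $\kappa(v,w)=k$ for all pairs of distinct vertices $v,w\in V(G)$.
   Context: All graphs are finite, simple, undirected and nonempty. For distinct vertices $v,w$, $\kappa(v,w)$ is the maximum number of internally vertex-disjoint $v$–$w$ paths (an edge $vw$ counts as one such path); $\kappa(v,v)=\infty$. For an ordered vertex set $W=(w_1,\ldots,w_k)$, $r_G(v,W)=[\kappa(v,w_1),\ldots,\kappa(v,w_k)]$. $W$ is resolving if $r_G(v_1,W)=r_G(v_2,W)$ implies $v_1=v_2$ (the empty set is resolving for the one-vertex graph). The connectivity dimension $\operatorname{cdim}(G)$ is the minimum cardinality of a resolving set. *)

theory Defs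
  imports Main "HOL-Library.Extended_Nat"
begin

definition simple_graph :: "'a set \<Rightarrow> 'a set set \<Rightarrow> bool" where
  "simple_graph V E \<longleftrightarrow> finite V \<and> V \<noteq> {} \<and>
     (\<forall>e\<in>E. \<exists>u v. u \<noteq> v \<and> u \<in> V \<and> v \<in> V \<and> e = {u, v})"

definition is_path :: "'a set \<Rightarrow> 'a set set \<Rightarrow> 'a \<Rightarrow> 'a \<Rightarrow> 'a list \<Rightarrow> bool" where
  "is_path V E v w p \<longleftrightarrow> length p \<ge> 2 \<and> hd p = v \<and> last p = w \<and> distinct p \<and>
     set p \<subseteq> V \<and> (\<forall>i. Suc i < length p \<longrightarrow> {p ! i, p ! Suc i} \<in> E)"

definition interior :: "'a list \<Rightarrow> 'a set" where
  "interior p = set (butlast (tl p))"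

definition disjoint_paths :: "'a set \<Rightarrow> 'a set set \<Rightarrow> 'a \<Rightarrow> 'a \<Rightarrow> 'a list set \<Rightarrow> bool" where
  "disjoint_paths V E v w P \<longleftrightarrow> (\<forall>p\<in>P. is_path V E v w p) \<and>
     (\<forall>p\<in>P. \<forall>q\<in>P. p \<noteq> q \<longrightarrow> interior p \<inter> interior q = {})"

definition kappa :: "'a set \<Rightarrow> 'a set set \<Rightarrow> 'a \<Rightarrow> 'a \<Rightarrow> enat" where
  "kappa V E v w = (if v = w then \<infinity>
     else enat (Max {card P | P. disjoint_paths V E v w P}))"

definition rep :: "'a set \<Rightarrow> 'a set set \<Rightarrow> 'a \<Rightarrow> 'a list \<Rightarrow> enat list" where
  "rep V E v W = map (kappa V E v) W"

definition resolving :: "'a set \<Rightarrow> 'a set set \<Rightarrow> 'a list \<Rightarrow> bool" where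
  "resolving V E W \<longleftrightarrow> distinct W \<and> set W \<subseteq> V \<and>
     (\<forall>v1\<in>V. \<forall>v2\<in>V. rep V E v1 W = rep V E v2 W \<longrightarrow> v1 = v2)"

definition cdim :: "'a set \<Rightarrow> 'a set set \<Rightarrow> nat" where
  "cdim V E = (LEAST k. \<exists>W. resolving V E W \<and> length W = k)"

definition connected_graph :: "'a set \<Rightarrow> 'a set set \<Rightarrow> bool" where
  "connected_graph V E \<longleftrightarrow> (\<forall>v\<in>V. \<forall>w\<in>V. v \<noteq> w \<longrightarrow> (\<exists>p. is_path V E v w p))"

definition uniformly_connected :: "'a set \<Rightarrow> 'a set set \<Rightarrow> bool" where
  "uniformly_connected V E \<longleftrightarrow>
     (\<exists>k::nat. \<forall>v\<in>V. \<forall>w\<in>V. v \<noteq> w \<longrightarrow> kappa V E v w = enat k)"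

end

theory Submission
  imports Defs
begin

lemma kappa_inf: "kappa V E v v = \<infinity>" by (simp add: kappa_def)
lemma kappa_fin: "v \<noteq> w \<Longrightarrow> kappa V E v w \<noteq> \<infinity>" by (simp add: kappa_def)

lemma path_rev: "is_path V E v w p \<Longrightarrow> is_path V E w v (rev p)"
proof -
  assume a: "is_path V E v w p"
  have l: "length p \<ge> 2" using a by (simp add: is_path_def)
  have "p \<noteq> []" using l by auto
  moreover have "\<forall>i. Suc i < length p \<longrightarrow> {rev p ! i, rev p ! Suc i} \<in> E"
  proof (intro allI impI)
    fix i assume i: "Suc i < length p"
    define j where "j = length p - Suc (Suc i)"
    have "Suc j < length p" using i j_def by auto
    hence "{p ! j, p ! Suc j} \<in> E" using a by (simp add: is_path_def)
    moreover have "rev p ! i = p ! Suc j" "rev p ! Suc i = p ! j"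
      using i j_def by (auto simp: rev_nth Suc_diff_Suc)
    ultimately show "{rev p ! i, rev p ! Suc i} \<in> E" by (simp add: insert_commute)
  qed
  ultimately show ?thesis using a by (auto simp: is_path_def hd_rev last_rev)
qed

lemma interior_rev: "interior (rev p) = interior p"
proof -
  have "tl (rev p) = rev (butlast p)" using butlast_rev[of "rev p"] by (metis rev_rev_ident)
  then show ?thesis by (simp add: interior_def butlast_tl)
qed

lemma disj_rev: "disjoint_paths V E v w P \<Longrightarrow> disjoint_paths V E w v (rev ` P)"
  unfolding disjoint_paths_def by (auto simp: path_rev interior_rev)

lemma cards_sub: "{card P | P. disjoint_paths V E v w P} \<subseteq> {card P | P. disjoint_paths V E w v P}"
proof
  fix c assume "c \<in> {card P | P. disjoint_paths V E v w P}"
  then obtain P where P: "disjoint_paths V E v w P" "c = card P" by auto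
  have "card (rev ` P) = card P" by (simp add: card_image)
  hence "c = card (rev ` P) \<and> disjoint_paths V E w v (rev ` P)" using disj_rev[OF P(1)] P(2) by simp
  thus "c \<in> {card P | P. disjoint_paths V E w v P}" by blast
qed

lemma kappa_sym: "kappa V E v w = kappa V E w v"
  unfolding kappa_def using cards_sub[of V E v w] cards_sub[of V E w v] by auto

lemma resolving_crit:
  assumes "distinct W" "set W \<subseteq> V"
    and "\<forall>v1\<in>V - set W. \<forall>v2\<in>V - set W. v1 \<noteq> v2 \<longrightarrow> (\<exists>w\<in>set W. kappa V E v1 w \<noteq> kappa V E v2 w)"
  shows "resolving V E W"
  unfolding resolving_def
proof (intro conjI assms(1,2) ballI impI)
  fix v1 v2 assume v: "v1 \<in> V" "v2 \<in> V" and r: "rep V E v1 W = rep V E v2 W"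
  have eq: "\<forall>w\<in>set W. kappa V E v1 w = kappa V E v2 w" using r by (simp add: rep_def)
  show "v1 = v2"
  proof (rule ccontr)
    assume ne: "v1 \<noteq> v2"
    show False
    proof (cases "v1 \<in> set W")
      case True
      then show ?thesis using eq kappa_inf kappa_fin ne by metis
    next
      case f1: False
      show ?thesis
      proof (cases "v2 \<in> set W")
        case True
        then show ?thesis using eq kappa_inf kappa_fin ne by metis
      next
        case False
        then show ?thesis using f1 assms(3) v ne eq by blast
      qed
    qed
  qed
qed

lemma exists_list: "finite S \<Longrightarrow> \<exists>W. distinct W \<and> set W = S \<and> length W = card S"
  using finite_distinct_list distinct_card by metis

theorem mainTheorem3:
  fixes V :: "'a set" and E :: "'a set set" and n :: nat
  assumes "simple_graph V E"
    and "connected_graph V E"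
    and "card V = n"
  shows "cdim V E = n - 1 \<longleftrightarrow> uniformly_connected V E"
proof -
  have fin: "finite V" and ne: "V \<noteq> {}" using assms(1) by (auto simp: simple_graph_def)
  then obtain x where x: "x \<in> V" by auto
  obtain W1 where W1: "distinct W1" "set W1 = V - {x}" "length W1 = card (V - {x})"
    using exists_list[of "V - {x}"] fin by auto
  have r1: "resolving V E W1"
    by (rule resolving_crit) (use W1 x in auto)
  have l1: "length W1 = n - 1" using W1 x assms(3) fin by simp
  have le: "cdim V E \<le> n - 1" unfolding cdim_def
    by (rule Least_le) (use r1 l1 in auto)
  show ?thesis
  proof
    assume c: "cdim V E = n - 1"
    show "uniformly_connected V E"
    proof (rule ccontr)
      assume nu: "\<not> uniformly_connected V E"
      have "\<exists>w a b. w \<in> V \<and> a \<in> V \<and> b \<in> V \<and> w \<noteq> a \<and> w \<noteq> b \<and> a \<noteq> b \<and> kappa V E w a \<noteq> kappa V E w b"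
      proof (rule ccontr)
        assume H: "\<not> ?thesis"
        have st: "kappa V E w a = kappa V E w b" if "w \<in> V" "a \<in> V" "b \<in> V" "w \<noteq> a" "w \<noteq> b" for w a b
          using H that by blast
        have all: "kappa V E a b = kappa V E c d" if "a \<in> V" "b \<in> V" "c \<in> V" "d \<in> V" "a \<noteq> b" "c \<noteq> d" for a b c d
        proof (cases "d = a")
          case True
          have 1: "kappa V E a b = kappa V E a c" using st[of a b c] that True by blast
          have 2: "kappa V E a c = kappa V E c a" by (rule kappa_sym)
          show ?thesis using 1 2 True by simp
        next
          case False
          have 1: "kappa V E a b = kappa V E a d" using st[of a b d] that False by blast
          have 2: "kappa V E a d = kappa V E d a" by (rule kappa_sym)
          have 3: "kappa V E d a = kappa V E d c" using st[of d a c] that False by blast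
          have 4: "kappa V E d c = kappa V E c d" by (rule kappa_sym)
          show ?thesis using 1 2 3 4 by simp
        qed
        show False
        proof (cases "\<exists>a\<in>V. \<exists>b\<in>V. a \<noteq> b")
          case True
          then obtain a b where ab: "a \<in> V" "b \<in> V" "a \<noteq> b" by auto
          obtain k where k: "kappa V E a b = enat k" using kappa_fin[OF ab(3), of V E] by (cases "kappa V E a b") auto
          have "\<forall>v\<in>V. \<forall>u\<in>V. v \<noteq> u \<longrightarrow> kappa V E v u = enat k"
          proof (intro ballI impI)
            fix v u assume "v \<in> V" "u \<in> V" "v \<noteq> u"
            then have "kappa V E a b = kappa V E v u" using all[OF ab(1,2) _ _ ab(3)] by blast
            then show "kappa V E v u = enat k" using k by simp
          qed
          then have "uniformly_connected V E" unfolding uniformly_connected_def by blast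
          then show False using nu by simp
        next
          case False
          then have "uniformly_connected V E" unfolding uniformly_connected_def by auto
          then show False using nu by simp
        qed
      qed
      then obtain w a b where t: "w \<in> V" "a \<in> V" "b \<in> V" "w \<noteq> a" "w \<noteq> b" "a \<noteq> b"
         "kappa V E w a \<noteq> kappa V E w b" by blast
      obtain W2 where W2: "distinct W2" "set W2 = V - {a, b}" "length W2 = card (V - {a, b})"
        using exists_list[of "V - {a,b}"] fin by auto
      have r2: "resolving V E W2"
      proof (rule resolving_crit)
        show "distinct W2" by (rule W2(1))
        show "set W2 \<subseteq> V" using W2 by auto
        show "\<forall>v1\<in>V - set W2. \<forall>v2\<in>V - set W2. v1 \<noteq> v2 \<longrightarrow> (\<exists>w\<in>set W2. kappa V E v1 w \<noteq> kappa V E v2 w)"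
        proof (intro ballI impI)
          fix v1 v2 assume "v1 \<in> V - set W2" "v2 \<in> V - set W2" "v1 \<noteq> v2"
          then have "(v1 = a \<and> v2 = b) \<or> (v1 = b \<and> v2 = a)" using W2 by auto
          moreover have "w \<in> set W2" using W2 t by auto
          moreover have "kappa V E a w \<noteq> kappa V E b w"
            using t(7) kappa_sym[of V E w a] kappa_sym[of V E w b] by simp
          ultimately have "kappa V E v1 w \<noteq> kappa V E v2 w"
            by (elim disjE conjE) (simp_all add: not_sym)
          then show "\<exists>w\<in>set W2. kappa V E v1 w \<noteq> kappa V E v2 w"
            using \<open>w \<in> set W2\<close> by blast
        qed
      qed
      have "card (V - {a, b}) = n - 2" using assms(3) fin t by (simp add: card_Diff_subset)
      moreover have "n \<ge> 3"
      proof -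
        have "{w, a, b} \<subseteq> V" using t by auto
        hence "card {w, a, b} \<le> n" using fin assms(3) card_mono by blast
        thus ?thesis using t by auto
      qed
      ultimately have "cdim V E \<le> n - 2" unfolding cdim_def
        using r2 W2 by (intro Least_le) auto
      then show False using c \<open>n \<ge> 3\<close> by simp
    qed
  next
    assume u: "uniformly_connected V E"
    then obtain k where k: "\<forall>v\<in>V. \<forall>w\<in>V. v \<noteq> w \<longrightarrow> kappa V E v w = enat k"
      unfolding uniformly_connected_def by auto
    have ge: "length W \<ge> n - 1" if r: "resolving V E W" for W
    proof (rule ccontr)
      assume nl: "\<not> ?thesis"
      have d: "distinct W" "set W \<subseteq> V" using r by (auto simp: resolving_def)
      have "card (set W) = length W" using d distinct_card by blast
      hence "card (V - set W) = n - length W" using d fin assms(3) by (simp add: card_Diff_subset)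
      hence "card (V - set W) \<ge> 2" using nl by simp
      then obtain v1 v2 where v: "v1 \<in> V - set W" "v2 \<in> V - set W" "v1 \<noteq> v2"
        using card_le_Suc0_iff_eq[of "V - set W"] fin \<open>card (V - set W) \<ge> 2\<close> by auto
      have "rep V E v1 W = rep V E v2 W" unfolding rep_def
      proof (intro map_cong refl)
        fix x assume "x \<in> set W"
        then have "x \<in> V" "x \<noteq> v1" "x \<noteq> v2" using d v by auto
        then show "kappa V E v1 x = kappa V E v2 x" using k v by (metis DiffD1)
      qed
      then show False using r v by (auto simp: resolving_def)
    qed
    have "\<exists>W. resolving V E W \<and> length W = cdim V E" unfolding cdim_def
      by (rule LeastI_ex) (use r1 in blast)
    then obtain W0 where "resolving V E W0" "length W0 = cdim V E" by blast
    then have "cdim V E \<ge> n - 1" using ge by metis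
    then show "cdim V E = n - 1" using le by simp
  qed
qed

end
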